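(* Let $V$ be a finite-dimensional real vector space with a non-degenerate symmetric bilinear form $\langle\cdot,\cdot\rangle$, and let $J:V\to V$ be linear, self-adjoint with respect to $\langle\cdot,\cdot\rangle$, with $J^2=-\operatorname{id}$. Let $V_+\subset V$ be a subspace on which $g:=\langle\cdot,\cdot\rangle|_{V_+}$ is positive definite, such that $V=V_+\oplus JV_+$ and $V_+\perp JV_+$. Let $T:V_+\to V_+$ be linear and set $\tilde V_+:=\{v+JTv: v\in V_+\}$. Then: (1) $\tilde V_+\perp J\tilde V_+$ if and only if $T$ is skew-adjoint with respect to $g$; (2) the restriction of $\langle\cdot,\cdot\rangle$ to $\tilde V_+$ is positive definite if and only if $|T|<1$, where $|T|$ denotes the operator norm of $T$ with respect to $g$. *)

theory Defs
  imports "HOL-Analysis.Analysis"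
begin

text \<open>A finite-dimensional real vector space is modelled by a type of class euclidean_space;
  only its vector-space structure is used, the form B is an arbitrary bilinear form.\<close>

definition symmetric_form :: "('a \<Rightarrow> 'a \<Rightarrow> real) \<Rightarrow> bool" where
  "symmetric_form B \<longleftrightarrow> (\<forall>x y. B x y = B y x)"

definition nondegenerate_form :: "('a::real_vector \<Rightarrow> 'a \<Rightarrow> real) \<Rightarrow> bool" where
  "nondegenerate_form B \<longleftrightarrow> (\<forall>x. (\<forall>y. B x y = 0) \<longrightarrow> x = 0)"

definition pos_def_on :: "('a \<Rightarrow> 'a \<Rightarrow> real) \<Rightarrow> 'a::real_vector set \<Rightarrow> bool" where
  "pos_def_on B W \<longleftrightarrow> (\<forall>v\<in>W. v \<noteq> 0 \<longrightarrow> B v v > 0)"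

definition orth_sets :: "('a \<Rightarrow> 'a \<Rightarrow> real) \<Rightarrow> 'a set \<Rightarrow> 'a set \<Rightarrow> bool" where
  "orth_sets B X Y \<longleftrightarrow> (\<forall>x\<in>X. \<forall>y\<in>Y. B x y = 0)"

definition linear_endo_on :: "'a::real_vector set \<Rightarrow> ('a \<Rightarrow> 'a) \<Rightarrow> bool" where
  "linear_endo_on W T \<longleftrightarrow> (\<forall>x\<in>W. T x \<in> W) \<and>
     (\<forall>x\<in>W. \<forall>y\<in>W. T (x + y) = T x + T y) \<and> (\<forall>c. \<forall>x\<in>W. T (c *\<^sub>R x) = c *\<^sub>R T x)"

text \<open>Operator norm of T on W with respect to the inner product g = B restricted to W
  (taken to be 0 if W is trivial).\<close>
definition op_norm_on :: "('a \<Rightarrow> 'a \<Rightarrow> real) \<Rightarrow> 'a::real_vector set \<Rightarrow> ('a \<Rightarrow> 'a) \<Rightarrow> real" where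
  "op_norm_on B W T = Sup ({0} \<union> {sqrt (B (T v) (T v)) | v. v \<in> W \<and> B v v = 1})"

end

theory Submission imports Defs begin


lemma ext_lin:
  fixes T :: "'a::euclidean_space \<Rightarrow> 'a"
  assumes "subspace Vp" "linear_endo_on Vp T"
  shows "\<exists>L. linear L \<and> (\<forall>x\<in>Vp. L x = T x)"
proof -
  obtain Bs where Bs: "Bs \<subseteq> Vp" "independent Bs" "Vp \<subseteq> span Bs"
    using maximal_independent_subset by blast
  obtain L where L: "linear L" "\<forall>x\<in>Bs. L x = T x"
    using linear_independent_extend[OF Bs(2)] by blast
  have T0: "T 0 = 0" using assms(2) assms(1) unfolding linear_endo_on_def
    by (metis scale_zero_left subspace_0)
  have "x \<in> Vp \<and> L x = T x" if "x \<in> span Bs" for x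
    using that
  proof (induct rule: span_induct)
    case step
    then show ?case using L Bs by auto
  next
    case base
    show ?case unfolding subspace_def
      using assms T0 L(1) unfolding linear_endo_on_def
      by (auto simp: subspace_add subspace_mul subspace_0 linear_add linear_scale linear_0)
  qed
  then show ?thesis using L Bs by blast
qed

lemma max_ratio:
  fixes B :: "'a::euclidean_space \<Rightarrow> 'a \<Rightarrow> real"
  assumes bB: "bilinear B" and pd: "pos_def_on B Vp" and sV: "subspace Vp" and lL: "linear L"
    and ne: "Vp \<noteq> {0}"
  shows "\<exists>u0\<in>Vp. u0 \<noteq> 0 \<and> (\<forall>v\<in>Vp. B (L v) (L v) * B u0 u0 \<le> B (L u0) (L u0) * B v v)"
proof -
  define K where "K = Vp \<inter> sphere 0 1"
  have cK: "compact K" unfolding K_def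
    using closed_Int_compact[OF closed_subspace[OF sV] compact_sphere] by simp
  obtain w where w: "w \<in> Vp" "w \<noteq> 0" using ne sV subspace_0 by blast
  have sc: "c *\<^sub>R x \<in> Vp" if "x \<in> Vp" for c x using sV that by (simp add: subspace_mul)
  have "(1 / norm w) *\<^sub>R w \<in> K" unfolding K_def using w sc by auto
  hence neK: "K \<noteq> {}" by blast
  have bb: "bounded_bilinear B" using bB bilinear_conv_bounded_bilinear by blast
  have cL: "continuous_on K L" using lL linear_conv_bounded_linear linear_continuous_on by blast
  have cB: "continuous_on K (\<lambda>u. B (L u) (L u))"
    by (rule bounded_bilinear.continuous_on[OF bb cL cL])
  have cB2: "continuous_on K (\<lambda>u. B u u)"
    by (rule bounded_bilinear.continuous_on[OF bb continuous_on_id continuous_on_id])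
  have Kpos: "B u u > 0" if "u \<in> K" for u using that pd unfolding K_def pos_def_on_def by auto
  have ch: "continuous_on K (\<lambda>u. B (L u) (L u) / B u u)"
    using cB cB2 Kpos by (intro continuous_on_divide) (auto, metis less_irrefl)
  obtain u0 where u0: "u0 \<in> K" "\<forall>y\<in>K. B (L y) (L y) / B y y \<le> B (L u0) (L u0) / B u0 u0"
    using continuous_attains_sup[OF cK neK ch] by blast
  have hom: "B (c *\<^sub>R x) (c *\<^sub>R y) = c * c * B x y" for c x y
    using bilinear_lmul[OF bB] bilinear_rmul[OF bB] by simp
  have pu0: "B u0 u0 > 0" using Kpos u0 by blast
  have "B (L v) (L v) * B u0 u0 \<le> B (L u0) (L u0) * B v v" if v: "v \<in> Vp" for v
  proof (cases "v = 0")
    case True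
    then show ?thesis using bilinear_lzero[OF bB] linear_0[OF lL] by simp
  next
    case False
    define c where "c = 1 / norm v"
    have c0: "c \<noteq> 0" using False c_def by simp
    have uK: "c *\<^sub>R v \<in> K" unfolding K_def c_def using v sc False by auto
    have pv: "B v v > 0" using pd v False unfolding pos_def_on_def by auto
    have "B (L (c *\<^sub>R v)) (L (c *\<^sub>R v)) / B (c *\<^sub>R v) (c *\<^sub>R v) = B (L v) (L v) / B v v"
      using c0 by (simp add: linear_scale[OF lL] hom)
    hence "B (L v) (L v) / B v v \<le> B (L u0) (L u0) / B u0 u0" using u0 uK by metis
    then show ?thesis using pv pu0 by (simp add: divide_le_eq le_divide_eq mult.commute)
  qed
  moreover have "u0 \<in> Vp" "u0 \<noteq> 0" using u0 unfolding K_def by auto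
  ultimately show ?thesis by blast
qed

theorem lemma9:
  fixes B :: "'a::euclidean_space \<Rightarrow> 'a \<Rightarrow> real"
    and J T :: "'a \<Rightarrow> 'a"
    and Vp :: "'a set"
  assumes "bilinear B" and "symmetric_form B" and "nondegenerate_form B"
    and "linear J" and "\<forall>x y. B (J x) y = B x (J y)" and "\<forall>x. J (J x) = - x"
    and "subspace Vp" and "pos_def_on B Vp"
    and "{x + y | x y. x \<in> Vp \<and> y \<in> J ` Vp} = UNIV" and "Vp \<inter> J ` Vp = {0}"
    and "orth_sets B Vp (J ` Vp)"
    and "linear_endo_on Vp T"
  shows "(orth_sets B ((\<lambda>v. v + J (T v)) ` Vp) (J ` ((\<lambda>v. v + J (T v)) ` Vp))
           \<longleftrightarrow> (\<forall>u\<in>Vp. \<forall>v\<in>Vp. B (T u) v = - B u (T v)))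
         \<and> (pos_def_on B ((\<lambda>v. v + J (T v)) ` Vp) \<longleftrightarrow> op_norm_on B Vp T < 1)"
proof -
  note bB = assms(1)
  have sym: "B x y = B y x" for x y using assms(2) unfolding symmetric_form_def by blast
  have adj: "B (J x) y = B x (J y)" for x y using assms(5) by blast
  have JJ: "J (J x) = - x" for x using assms(6) by blast
  note lJ = assms(4) and sV = assms(7) and pd = assms(8)
  have TV: "T x \<in> Vp" if "x \<in> Vp" for x using assms(12) that unfolding linear_endo_on_def by blast
  have orth: "B p (J q) = 0" if "p \<in> Vp" "q \<in> Vp" for p q
    using assms(11) that unfolding orth_sets_def by blast
  have orth': "B (J q) p = 0" if "p \<in> Vp" "q \<in> Vp" for p q using orth[OF that] sym by metis
  have ladd: "B (x + y) z = B x z + B y z" for x y z using bilinear_ladd[OF bB] .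
  have radd: "B z (x + y) = B z x + B z y" for x y z using bilinear_radd[OF bB] .
  have lneg: "B (- x) z = - B x z" for x z using bilinear_lneg[OF bB] .
  have rneg: "B z (- x) = - B z x" for x z using bilinear_rneg[OF bB] .
  have hom: "B (c *\<^sub>R x) (c *\<^sub>R y) = c * c * B x y" for c x y
    using bilinear_lmul[OF bB] bilinear_rmul[OF bB] by simp
  have key1: "B (v + J (T v)) (J (v' + J (T v'))) = - (B v (T v') + B (T v) v')"
    if v: "v \<in> Vp" "v' \<in> Vp" for v v'
  proof -
    have e: "J (v' + J (T v')) = J v' + - T v'" using JJ linear_add[OF lJ] by simp
    have a: "B (J (T v)) (J v') = - B (T v) v'" using adj JJ rneg by metis
    show ?thesis unfolding e ladd radd lneg rneg a
      using orth[OF v(1) v(2)] orth'[OF TV[OF v(2)] TV[OF v(1)]] by simp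
  qed
  have key2: "B (v + J (T v)) (v + J (T v)) = B v v - B (T v) (T v)" if v: "v \<in> Vp" for v
  proof -
    have a: "B (J (T v)) (J (T v)) = - B (T v) (T v)" using adj JJ rneg by metis
    show ?thesis unfolding ladd radd a
      using orth[OF v TV[OF v]] orth'[OF v TV[OF v]] by simp
  qed
  have inj0: "v = 0" if "v \<in> Vp" "v + J (T v) = 0" for v
  proof -
    have "v = J (- T v)" using that linear_neg[OF lJ] by (simp add: add_eq_0_iff)
    moreover have "- T v \<in> Vp" using TV[OF that(1)] sV by (simp add: subspace_neg)
    ultimately have "v \<in> Vp \<inter> J ` Vp" using that by blast
    thus ?thesis using assms(10) by blast
  qed
  have part1: "orth_sets B ((\<lambda>v. v + J (T v)) ` Vp) (J ` ((\<lambda>v. v + J (T v)) ` Vp))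
           \<longleftrightarrow> (\<forall>u\<in>Vp. \<forall>v\<in>Vp. B (T u) v = - B u (T v))"
  proof
    assume h: "orth_sets B ((\<lambda>v. v + J (T v)) ` Vp) (J ` ((\<lambda>v. v + J (T v)) ` Vp))"
    show "\<forall>u\<in>Vp. \<forall>v\<in>Vp. B (T u) v = - B u (T v)"
    proof (intro ballI)
      fix u v assume uv: "u \<in> Vp" "v \<in> Vp"
      have "B (u + J (T u)) (J (v + J (T v))) = 0" using h uv unfolding orth_sets_def by blast
      thus "B (T u) v = - B u (T v)" using key1[OF uv] by simp
    qed
  next
    assume h: "\<forall>u\<in>Vp. \<forall>v\<in>Vp. B (T u) v = - B u (T v)"
    show "orth_sets B ((\<lambda>v. v + J (T v)) ` Vp) (J ` ((\<lambda>v. v + J (T v)) ` Vp))"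
      unfolding orth_sets_def using key1 h by auto
  qed
  have pdiff: "pos_def_on B ((\<lambda>v. v + J (T v)) ` Vp) \<longleftrightarrow> (\<forall>v\<in>Vp. v \<noteq> 0 \<longrightarrow> B (T v) (T v) < B v v)"
  proof -
    have T0: "T 0 = 0" using assms(12) sV unfolding linear_endo_on_def
      by (metis scale_zero_left subspace_0)
    have f0: "v + J (T v) \<noteq> 0 \<longleftrightarrow> v \<noteq> 0" if "v \<in> Vp" for v
      using inj0[OF that] T0 linear_0[OF lJ] by auto
    have "pos_def_on B ((\<lambda>v. v + J (T v)) ` Vp) \<longleftrightarrow>
      (\<forall>v\<in>Vp. v + J (T v) \<noteq> 0 \<longrightarrow> 0 < B (v + J (T v)) (v + J (T v)))"
      unfolding pos_def_on_def by blast
    also have "\<dots> \<longleftrightarrow> (\<forall>v\<in>Vp. v \<noteq> 0 \<longrightarrow> 0 < B v v - B (T v) (T v))"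
      using f0 key2 by simp
    finally show ?thesis by simp
  qed
  have TVnn: "B (T v) (T v) \<ge> 0" if "v \<in> Vp" for v
    using pd TV[OF that] bilinear_lzero[OF bB] unfolding pos_def_on_def
    by (metis less_eq_real_def)
  have part2: "(\<forall>v\<in>Vp. v \<noteq> 0 \<longrightarrow> B (T v) (T v) < B v v) \<longleftrightarrow> op_norm_on B Vp T < 1"
  proof (cases "Vp = {0}")
    case True
    have "{sqrt (B (T v) (T v)) | v. v \<in> Vp \<and> B v v = 1} = {}"
      using True bilinear_lzero[OF bB] by auto
    then show ?thesis using True unfolding op_norm_on_def by simp
  next
    case False
    obtain L where L: "linear L" "\<forall>x\<in>Vp. L x = T x" using ext_lin[OF sV assms(12)] by blast
    obtain u0 where u0: "u0 \<in> Vp" "u0 \<noteq> 0"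
      "\<forall>v\<in>Vp. B (L v) (L v) * B u0 u0 \<le> B (L u0) (L u0) * B v v"
      using max_ratio[OF bB pd sV L(1) False] by blast
    have pu0: "B u0 u0 > 0" using pd u0 unfolding pos_def_on_def by blast
    define M where "M = B (T u0) (T u0) / B u0 u0"
    have M0: "M \<ge> 0" unfolding M_def using TVnn[OF u0(1)] pu0 by simp
    have bnd: "B (T v) (T v) \<le> M * B v v" if "v \<in> Vp" for v
      using u0(3) that L(2) u0(1) pu0 unfolding M_def
      by (simp add: field_simps)
    define S where "S = {0} \<union> {sqrt (B (T v) (T v)) | v. v \<in> Vp \<and> B v v = 1}"
    have Sb: "x \<le> sqrt M" if "x \<in> S" for x
      using that bnd M0 unfolding S_def by (auto intro: real_sqrt_le_mono) (metis mult.right_neutral)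
    have bdd: "bdd_above S" using Sb by (rule bdd_aboveI[where M="sqrt M"]) blast
    have opS: "op_norm_on B Vp T = Sup S" unfolding op_norm_on_def S_def by simp
    show ?thesis
    proof
      assume h: "\<forall>v\<in>Vp. v \<noteq> 0 \<longrightarrow> B (T v) (T v) < B v v"
      have "M < 1" using h u0 pu0 unfolding M_def by simp
      hence "Sup S \<le> sqrt M" "sqrt M < 1" using Sb by (auto intro!: cSup_least simp: S_def)
      thus "op_norm_on B Vp T < 1" using opS by linarith
    next
      assume h: "op_norm_on B Vp T < 1"
      show "\<forall>v\<in>Vp. v \<noteq> 0 \<longrightarrow> B (T v) (T v) < B v v"
      proof (intro ballI impI)
        fix v assume v: "v \<in> Vp" "v \<noteq> 0"
        have pv: "B v v > 0" using pd v unfolding pos_def_on_def by blast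
        define c where "c = 1 / sqrt (B v v)"
        have cc: "c * c = 1 / B v v" unfolding c_def using pv
          by (simp add: real_sqrt_mult[symmetric])
        have uV: "c *\<^sub>R v \<in> Vp" using v sV by (simp add: subspace_mul)
        have Tu: "T (c *\<^sub>R v) = c *\<^sub>R T v" using assms(12) v unfolding linear_endo_on_def by blast
        have "B (c *\<^sub>R v) (c *\<^sub>R v) = 1" using hom cc pv by simp
        hence "sqrt (B (T (c *\<^sub>R v)) (T (c *\<^sub>R v))) \<in> S" using uV unfolding S_def by blast
        hence "sqrt (B (T (c *\<^sub>R v)) (T (c *\<^sub>R v))) < 1" using cSup_upper[OF _ bdd] opS h by (metis order.strict_trans1)
        hence "B (T v) (T v) / B v v < 1" unfolding Tu hom cc by simp
        thus "B (T v) (T v) < B v v" using pv by simp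
      qed
    qed
  qed
  show ?thesis using part1 pdiff part2 by blast
qed

end
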